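(* Let $\mu\neq0$ and let $\gamma$ be an arc-length parametrized curve in $\mathbb M^2(\rho)$ whose curvature $\kappa$ is non-constant and satisfies $\frac{d^2}{ds^2}(e^{\mu\kappa})+(\kappa^2-\kappa/\mu+\rho)e^{\mu\kappa}=0$. Then there is a constant $d\in\mathbb R$ such that $$\mu^4\kappa_s^2=d\,e^{-2\mu\kappa}-(\mu\kappa-1)^2-\rho\mu^2 .$$
   Context: $\mathbb M^2(\rho)$ is the simply connected complete surface of constant curvature $\rho$; $\kappa$ is the signed geodesic curvature of $\gamma$ and $\kappa_s$ its derivative with respect to arc-length $s$. *)

theory Defs
  imports "HOL-Analysis.Analysis"
begin

end

theory Submission
  imports Defs
begin

theorem proposition2p5:
  fixes \<mu> \<rho> :: real and \<kappa> \<kappa>' :: "real \<Rightarrow> real" and I :: "real set"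
  assumes mu: "\<mu> \<noteq> 0"
    and I: "open I" "connected I"
    and d1: "\<And>s. s \<in> I \<Longrightarrow> (\<kappa> has_real_derivative \<kappa>' s) (at s)"
    and d2: "\<And>s. s \<in> I \<Longrightarrow> \<kappa>' differentiable (at s)"
    and nonconst: "\<exists>s\<in>I. \<exists>t\<in>I. \<kappa> s \<noteq> \<kappa> t"
    and ode: "\<And>s. s \<in> I \<Longrightarrow>
       deriv (deriv (\<lambda>t. exp (\<mu> * \<kappa> t))) s
         + ((\<kappa> s)\<^sup>2 - \<kappa> s / \<mu> + \<rho>) * exp (\<mu> * \<kappa> s) = 0"
  shows "\<exists>d::real. \<forall>s\<in>I.
     \<mu> ^ 4 * (\<kappa>' s)\<^sup>2 = d * exp (- 2 * \<mu> * \<kappa> s) - (\<mu> * \<kappa> s - 1)\<^sup>2 - \<rho> * \<mu>\<^sup>2"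
proof -
  define u where "u = (\<lambda>t. exp (\<mu> * \<kappa> t))"
  define k2 where "k2 = deriv \<kappa>'"
  have dk2: "(\<kappa>' has_real_derivative k2 s) (at s)" if "s \<in> I" for s
    using d2[OF that] DERIV_deriv_iff_real_differentiable k2_def by blast
  have du: "(u has_real_derivative \<mu> * \<kappa>' t * u t) (at t)" if "t \<in> I" for t
    unfolding u_def
    by (rule derivative_eq_intros d1[OF that] refl | simp)+
  have deq: "deriv u t = \<mu> * \<kappa>' t * u t" if "t \<in> I" for t
    using DERIV_imp_deriv[OF du[OF that]] .
  have key: "\<mu> * (k2 s + \<mu> * (\<kappa>' s)\<^sup>2) + ((\<kappa> s)\<^sup>2 - \<kappa> s / \<mu> + \<rho>) = 0"
    if s: "s \<in> I" for s
  proof -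
    have "((\<lambda>t. \<mu> * \<kappa>' t * u t) has_real_derivative
             \<mu> * k2 s * u s + \<mu> * \<kappa>' s * (\<mu> * \<kappa>' s * u s)) (at s)"
      by (rule derivative_eq_intros dk2[OF s] du[OF s] refl | simp)+
    then have "(deriv u has_real_derivative
             \<mu> * k2 s * u s + \<mu> * \<kappa>' s * (\<mu> * \<kappa>' s * u s)) (at s)"
      using has_field_derivative_transform_within_open[of _ _ s I "deriv u"] s I(1) deq
      by simp
    then have "deriv (deriv u) s = \<mu> * k2 s * u s + \<mu> * \<kappa>' s * (\<mu> * \<kappa>' s * u s)"
      by (rule DERIV_imp_deriv)
    with ode[OF s] have "(\<mu> * (k2 s + \<mu> * (\<kappa>' s)\<^sup>2) + ((\<kappa> s)\<^sup>2 - \<kappa> s / \<mu> + \<rho>)) * u s = 0"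
      unfolding u_def by (simp add: algebra_simps power2_eq_square)
    moreover have "u s \<noteq> 0" unfolding u_def by simp
    ultimately show ?thesis by simp
  qed
  define F where "F = (\<lambda>s. exp (2 * \<mu> * \<kappa> s) * (\<mu> ^ 4 * (\<kappa>' s)\<^sup>2 + (\<mu> * \<kappa> s - 1)\<^sup>2 + \<rho> * \<mu>\<^sup>2))"
  have dF: "(F has_real_derivative 0) (at s)" if s: "s \<in> I" for s
  proof -
    have "(F has_real_derivative
       (exp (2 * \<mu> * \<kappa> s) * (2 * \<mu> * \<kappa>' s)) * (\<mu> ^ 4 * (\<kappa>' s)\<^sup>2 + (\<mu> * \<kappa> s - 1)\<^sup>2 + \<rho> * \<mu>\<^sup>2)
       + exp (2 * \<mu> * \<kappa> s) * (\<mu> ^ 4 * (2 * \<kappa>' s * k2 s) + 2 * (\<mu> * \<kappa> s - 1) * (\<mu> * \<kappa>' s))) (at s)"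
      unfolding F_def
      by (rule derivative_eq_intros dk2[OF s] d1[OF s] refl | simp)+
    moreover have "(exp (2 * \<mu> * \<kappa> s) * (2 * \<mu> * \<kappa>' s)) * (\<mu> ^ 4 * (\<kappa>' s)\<^sup>2 + (\<mu> * \<kappa> s - 1)\<^sup>2 + \<rho> * \<mu>\<^sup>2)
       + exp (2 * \<mu> * \<kappa> s) * (\<mu> ^ 4 * (2 * \<kappa>' s * k2 s) + 2 * (\<mu> * \<kappa> s - 1) * (\<mu> * \<kappa>' s))
       = 2 * \<mu> * \<kappa>' s * exp (2 * \<mu> * \<kappa> s) * (\<mu> ^ 4 * (\<kappa>' s)\<^sup>2 + (\<mu> * \<kappa> s - 1)\<^sup>2 + \<rho> * \<mu>\<^sup>2
          + \<mu>^3 * k2 s + \<mu> * \<kappa> s - 1)"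
      by (simp add: algebra_simps power2_eq_square power3_eq_cube power4_eq_xxxx)
    moreover have "\<mu> ^ 4 * (\<kappa>' s)\<^sup>2 + (\<mu> * \<kappa> s - 1)\<^sup>2 + \<rho> * \<mu>\<^sup>2
          + \<mu>^3 * k2 s + \<mu> * \<kappa> s - 1 = 0"
    proof -
      have m: "\<mu> * (\<kappa> s / \<mu>) = \<kappa> s" using mu by simp
      have P: "\<mu>^2 * k2 s + \<mu>^3 * (\<kappa>' s)\<^sup>2 + \<mu> * (\<kappa> s)\<^sup>2 - \<kappa> s + \<rho> * \<mu> = 0"
      proof -
        have "\<mu> * (\<mu> * (k2 s + \<mu> * (\<kappa>' s)\<^sup>2) + ((\<kappa> s)\<^sup>2 - \<kappa> s / \<mu> + \<rho>)) = 0"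
          using key[OF s] by simp
        then show ?thesis unfolding distrib_left right_diff_distrib m
          by (simp add: algebra_simps power2_eq_square power3_eq_cube)
      qed
      have "\<mu> ^ 4 * (\<kappa>' s)\<^sup>2 + (\<mu> * \<kappa> s - 1)\<^sup>2 + \<rho> * \<mu>\<^sup>2
          + \<mu>^3 * k2 s + \<mu> * \<kappa> s - 1 = \<mu> * (\<mu>^2 * k2 s + \<mu>^3 * (\<kappa>' s)\<^sup>2 + \<mu> * (\<kappa> s)\<^sup>2 - \<kappa> s + \<rho> * \<mu>)"
        by (simp add: algebra_simps power2_eq_square power3_eq_cube power4_eq_xxxx)
      then show ?thesis using P by simp
    qed
    ultimately show ?thesis by simp
  qed
  obtain s0 where s0: "s0 \<in> I" using nonconst by blast
  have cont: "continuous_on I F"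
    using dF by (meson DERIV_isCont continuous_at_imp_continuous_on)
  obtain c where c: "\<And>x. x \<in> I \<Longrightarrow> F x = c"
    using DERIV_zero_connected_constant[of I "{}" F] I cont dF by auto
  show ?thesis
  proof (intro exI ballI)
    fix s assume s: "s \<in> I"
    have "exp (2 * \<mu> * \<kappa> s) * (\<mu> ^ 4 * (\<kappa>' s)\<^sup>2 + (\<mu> * \<kappa> s - 1)\<^sup>2 + \<rho> * \<mu>\<^sup>2) = c"
      using c[OF s] by (simp add: F_def)
    then have "\<mu> ^ 4 * (\<kappa>' s)\<^sup>2 + (\<mu> * \<kappa> s - 1)\<^sup>2 + \<rho> * \<mu>\<^sup>2 = c * exp (- 2 * \<mu> * \<kappa> s)"
    proof -
      have e: "exp (2 * \<mu> * \<kappa> s) * exp (- 2 * \<mu> * \<kappa> s) = 1"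
        by (simp add: exp_add[symmetric])
      assume h: "exp (2 * \<mu> * \<kappa> s) * (\<mu> ^ 4 * (\<kappa>' s)\<^sup>2 + (\<mu> * \<kappa> s - 1)\<^sup>2 + \<rho> * \<mu>\<^sup>2) = c"
      have "c * exp (- 2 * \<mu> * \<kappa> s) = (exp (2 * \<mu> * \<kappa> s) * exp (- 2 * \<mu> * \<kappa> s)) * (\<mu> ^ 4 * (\<kappa>' s)\<^sup>2 + (\<mu> * \<kappa> s - 1)\<^sup>2 + \<rho> * \<mu>\<^sup>2)"
        unfolding h[symmetric] by (simp only: mult.assoc mult.commute mult.left_commute)
      then show ?thesis using e by simp
    qed
    then show "\<mu> ^ 4 * (\<kappa>' s)\<^sup>2 = c * exp (- 2 * \<mu> * \<kappa> s) - (\<mu> * \<kappa> s - 1)\<^sup>2 - \<rho> * \<mu>\<^sup>2"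
      by linarith
  qed
qed

end
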